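(* In the setting described in the context, let $\hat u_0=\min\{x\in[v,z_0]: f^2(x)=d\}$, for $n\ge1$ let $\hat\mu'_{m,n}=\max\{x\in[v,\hat u_0]: f^{m+2n}(x)=d\}$, and for $n,k\ge1$ let $\hat\mu_{m,n,k}=\min\{x\in[\hat\mu'_{m,n},\hat\mu'_{m,n+1}]: f^{m+2n+2k}(x)=d\}$ (these sets are nonempty). Then for each $n\ge1$ and $k\ge1$, every periodic point of $f$ in $[\hat\mu'_{m,n},\hat\mu_{m,n,k}]$ whose least period is odd has least period $\ge m+2n+2k$.
   Context: Let $I$ be a compact interval and $f:I\to I$ continuous; $f^1=f$, $f^n=f\circ f^{n-1}$. A point $x_0$ is a periodic point of least period $k$ (a period-$k$ point) if $f^k(x_0)=x_0$ and $f^i(x_0)\ne x_0$ for $0<i<k$. Let $m\ge3$ be odd and let $P$ be a periodic orbit of $f$ of least period $m$. Put $e=f^{m-1}(\min P)$. Let $v\in[\min P,e)$ be a point with $f(v)=e$, and let $z\in(v,e)$ be a fixed point of $f$ (such points exist). Define $z_0=\min\{x\in[v,z]: f^2(x)=x\}$ and $d=\max\{x\in[\min P,v]: f^2(x)=z_0\}$ (both sets are nonempty). *)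

theory Defs
  imports "HOL-Analysis.Analysis"
begin

definition least_period_point :: "(real \<Rightarrow> real) \<Rightarrow> nat \<Rightarrow> real \<Rightarrow> bool" where
  "least_period_point f k x \<longleftrightarrow>
     0 < k \<and> (f ^^ k) x = x \<and> (\<forall>i. 0 < i \<and> i < k \<longrightarrow> (f ^^ i) x \<noteq> x)"

end

theory Submission imports Defs begin

lemma fp_add: "(f ^^ (i + j)) x = (f ^^ i) ((f ^^ j) x)"
  by (simp add: funpow_add)

lemma fp_comm: "(f ^^ i) ((f ^^ j) x) = (f ^^ j) ((f ^^ i) x)"
  by (metis fp_add add.commute)

lemma fp_cont:
  fixes f :: "real \<Rightarrow> real"
  assumes "continuous_on {a..b} f" "f ` {a..b} \<subseteq> {a..b}"
  shows "continuous_on {a..b} (f ^^ n) \<and> (f ^^ n) ` {a..b} \<subseteq> {a..b}"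
proof (induction n)
  case 0 then show ?case by (simp add: continuous_on_id)
next
  case (Suc n)
  then have c: "continuous_on {a..b} (\<lambda>x. f ((f ^^ n) x))"
    by (intro continuous_on_compose2[OF assms(1)]) auto
  show ?case using c Suc assms(2) by (auto simp: o_def)
qed

lemma ivt2:
  fixes h :: "real \<Rightarrow> real"
  assumes "continuous_on {s..t} h" "s \<le> t"
    "(h s \<le> c \<and> c \<le> h t) \<or> (h t \<le> c \<and> c \<le> h s)"
  shows "\<exists>x. s \<le> x \<and> x \<le> t \<and> h x = c"
  using assms IVT'[of h s c t] IVT2'[of h t c s] by auto

lemma per2:
  assumes "(f ^^ 2) w = w"
  shows "(f ^^ (2*r)) w = w \<and> (f ^^ (2*r+1)) w = f w"
proof (induction r)
  case 0 then show ?case by simp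
next
  case (Suc r)
  have "(f ^^ (2*Suc r)) w = (f ^^ (2*r)) ((f ^^ 2) w)"
    using fp_add[of "2*r" 2 f w] by simp
  then have A: "(f ^^ (2*Suc r)) w = w" using Suc assms by simp
  then show ?case by simp
qed

lemma perj:
  assumes "(f ^^ p) y = y"
  shows "(f ^^ (p*j)) y = y"
proof (induction j)
  case 0 then show ?case by simp
next
  case (Suc j)
  have "(f ^^ (p*Suc j)) y = (f ^^ (p*j)) ((f ^^ p) y)"
    using fp_add[of "p*j" p f y] by (simp add: add.commute)
  then show ?case using Suc assms by simp
qed

lemma fixj:
  assumes "f w = w"
  shows "(f ^^ j) w = w"
  by (induction j) (simp_all add: assms)

lemma lev_inf:
  fixes h :: "real \<Rightarrow> real"
  assumes "continuous_on {s..t} h" "s \<le> x1" "x1 \<le> t" "h x1 = c"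
  shows "Inf {x \<in> {s..t}. h x = c} \<in> {x \<in> {s..t}. h x = c} \<and> (\<forall>y \<in> {x \<in> {s..t}. h x = c}. Inf {x \<in> {s..t}. h x = c} \<le> y)"
proof -
  have ne: "{x \<in> {s..t}. h x = c} \<noteq> {}" using assms by auto
  have bb: "bdd_below {x \<in> {s..t}. h x = c}" by (rule bdd_belowI[of _ s]) auto
  have cl: "closed {x \<in> {s..t}. h x = c}"
    by (rule continuous_closed_preimage_constant[OF assms(1)]) simp
  show ?thesis using closed_contains_Inf[OF ne bb cl] cInf_lower[OF _ bb] by blast
qed

lemma lev_sup:
  fixes h :: "real \<Rightarrow> real"
  assumes "continuous_on {s..t} h" "s \<le> x1" "x1 \<le> t" "h x1 = c"
  shows "Sup {x \<in> {s..t}. h x = c} \<in> {x \<in> {s..t}. h x = c} \<and> (\<forall>y \<in> {x \<in> {s..t}. h x = c}. y \<le> Sup {x \<in> {s..t}. h x = c})"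
proof -
  have ne: "{x \<in> {s..t}. h x = c} \<noteq> {}" using assms by auto
  have bb: "bdd_above {x \<in> {s..t}. h x = c}" by (rule bdd_aboveI[of _ t]) auto
  have cl: "closed {x \<in> {s..t}. h x = c}"
    by (rule continuous_closed_preimage_constant[OF assms(1)]) simp
  show ?thesis using closed_contains_Sup[OF ne bb cl] cSup_upper[OF _ bb] by blast
qed

lemma lev_inf_fix:
  fixes h :: "real \<Rightarrow> real"
  assumes "continuous_on {s..t} h" "s \<le> x1" "x1 \<le> t" "h x1 = x1"
  shows "Inf {x \<in> {s..t}. h x = x} \<in> {x \<in> {s..t}. h x = x} \<and> (\<forall>y \<in> {x \<in> {s..t}. h x = x}. Inf {x \<in> {s..t}. h x = x} \<le> y)"
proof -
  have c2: "continuous_on {s..t} (\<lambda>x. h x - x)"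
    by (intro continuous_on_diff assms(1) continuous_on_id)
  have eq: "{x \<in> {s..t}. h x = x} = {x \<in> {s..t}. h x - x = 0}" by auto
  show ?thesis unfolding eq by (rule lev_inf[OF c2]) (use assms in auto)
qed

theorem lemma14:
  fixes f :: "real \<Rightarrow> real" and a b :: real and m :: nat and P :: "real set"
    and v z :: real
  assumes ab: "a \<le> b"
    and cont: "continuous_on {a..b} f"
    and maps: "f ` {a..b} \<subseteq> {a..b}"
    and m: "m \<ge> 3" "odd m"
    and orbit: "\<exists>x0\<in>{a..b}. least_period_point f m x0 \<and> P = {(f ^^ i) x0 | i. i < m}"
    and e_def: "e = (f ^^ (m - 1)) (Min P)"
    and v: "v \<in> {Min P..<e}" "f v = e"
    and z: "z \<in> {v<..<e}" "f z = z"
    and z0_def: "z0 = Inf {x \<in> {v..z}. (f ^^ 2) x = x}"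
    and d_def: "d = Sup {x \<in> {Min P..v}. (f ^^ 2) x = z0}"
    and u0_def: "u0 = Inf {x \<in> {v..z0}. (f ^^ 2) x = d}"
    and mu'_def: "\<And>n. mu' n = Sup {x \<in> {v..u0}. (f ^^ (m + 2*n)) x = d}"
    and mu_def: "\<And>n k. mu n k = Inf {x \<in> {mu' n..mu' (n+1)}. (f ^^ (m + 2*n + 2*k)) x = d}"
  shows "\<forall>n k y p. n \<ge> 1 \<and> k \<ge> 1 \<and> y \<in> {mu' n..mu n k} \<and> least_period_point f p y \<and> odd p
           \<longrightarrow> p \<ge> m + 2*n + 2*k"
proof -
  obtain x0 where x0: "x0 \<in> {a..b}" "least_period_point f m x0" and P: "P = {(f ^^ i) x0 | i. i < m}"
    using orbit by blast
  have fc: "\<And>n. continuous_on {a..b} (f ^^ n)" and fm: "\<And>n x. x \<in> {a..b} \<Longrightarrow> (f ^^ n) x \<in> {a..b}"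
    using fp_cont[OF cont maps] by (auto simp: image_subset_iff)
  have cs: "\<And>n s t. a \<le> s \<Longrightarrow> t \<le> b \<Longrightarrow> continuous_on {s..t} (f ^^ n)"
    by (rule continuous_on_subset[OF fc]) auto
  have csf: "\<And>s t. a \<le> s \<Longrightarrow> t \<le> b \<Longrightarrow> continuous_on {s..t} f"
    by (rule continuous_on_subset[OF cont]) auto
  have g2: "\<And>x. (f ^^ 2) x = f (f x)" by (simp add: numeral_2_eq_2)
  have per: "(f ^^ m) x0 = x0" and notfix: "f x0 \<noteq> x0"
    using x0(2) m unfolding least_period_point_def by (auto dest: spec[of _ 1])
  have Pim: "P = (\<lambda>i. (f ^^ i) x0) ` {..<m}" using P by auto
  have Pfin: "finite P" using Pim by simp
  have Pne: "P \<noteq> {}" using Pim m by (auto simp: lessThan_empty_iff)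
  have PC: "P \<subseteq> {a..b}" using Pim fm x0(1) by auto
  have fP: "\<And>q. q \<in> P \<Longrightarrow> f q \<in> P"
  proof -
    fix q assume "q \<in> P"
    then obtain i where i: "i < m" "q = (f ^^ i) x0" using Pim by auto
    show "f q \<in> P"
    proof (cases "Suc i < m")
      case True then show ?thesis using i Pim by (auto intro!: image_eqI[of _ _ "Suc i"])
    next
      case False then have "Suc i = m" using i by simp
      then have "f q = x0" using i per by (metis funpow.simps(2) o_apply)
      then show ?thesis using Pim m by (auto intro!: image_eqI[of _ _ 0])
    qed
  qed
  have gPP: "\<And>q. q \<in> P \<Longrightarrow> (f ^^ 2) q \<in> P" using fP g2 by simp
  have gP: "\<And>q. q \<in> P \<Longrightarrow> (f ^^ 2) q \<noteq> q"
  proof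
    fix q assume q: "q \<in> P" "(f ^^ 2) q = q"
    then obtain i where i: "i < m" "q = (f ^^ i) x0" using Pim by auto
    have "(f ^^ (m - i)) q = x0" using i per fp_add[of "m-i" i f x0] by simp
    moreover have "(f ^^ (m - i)) ((f ^^ 2) q) = (f ^^ 2) ((f ^^ (m - i)) q)" by (rule fp_comm)
    ultimately have x02: "(f ^^ 2) x0 = x0" using q by simp
    obtain r where r: "m = 2*r+1" using m(2) oddE by blast
    have "(f ^^ m) x0 = f x0" using per2[OF x02, of r] r by simp
    then show False using per notfix by simp
  qed
  define mP where "mP = Min P"
  have mP: "mP \<in> P" "\<And>q. q \<in> P \<Longrightarrow> mP \<le> q" using Pfin Pne unfolding mP_def by auto
  have mPm: "(f ^^ m) mP = mP"
  proof -
    obtain i where i: "mP = (f ^^ i) x0" using mP(1) Pim by auto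
    show ?thesis using i per fp_comm[of m f i x0] by simp
  qed
  have e': "e = (f ^^ (m - 1)) mP" using e_def mP_def by simp
  have fe: "f e = mP"
  proof -
    have "f e = (f ^^ Suc (m - 1)) mP" using e' by simp
    also have "Suc (m - 1) = m" using m by simp
    finally show ?thesis using mPm by simp
  qed
  have gv: "(f ^^ 2) v = mP" using g2 v(2) fe by simp
  have mPv: "mP < v"
  proof -
    have "mP \<le> v" using v(1) mP_def by simp
    moreover have "mP \<noteq> v" using gv gP[OF mP(1)] by auto
    ultimately show ?thesis by simp
  qed
  have ve: "v < z" "z < e" "v < e" using z(1) by auto
  have aC: "a \<le> mP" "mP \<le> b" using PC mP(1) by auto
  have eC: "a \<le> e" "e \<le> b" using fm[of mP "m - 1"] aC e' by auto
  have vC: "a \<le> v" "v \<le> b" "a \<le> z" "z \<le> b" using aC eC mPv ve by auto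
  have z0P: "z0 \<in> {x \<in> {v..z}. (f ^^ 2) x = x} \<and> (\<forall>y\<in>{x \<in> {v..z}. (f ^^ 2) x = x}. z0 \<le> y)"
    unfolding z0_def
  proof (rule lev_inf_fix[OF cs])
    show "(f ^^ 2) z = z" using z(2) g2 by simp
  qed (use vC ve in auto)
  have z0: "v \<le> z0" "z0 \<le> z" "(f ^^ 2) z0 = z0" using z0P by auto
  have z0min: "\<And>x. v \<le> x \<Longrightarrow> x \<le> z \<Longrightarrow> (f ^^ 2) x = x \<Longrightarrow> z0 \<le> x" using z0P by auto
  have vz0: "v < z0" using z0 gv mPv by (metis order_le_less)
  have z0e: "z0 < e" using z0 ve by simp
  have fgt: "\<And>x. v \<le> x \<Longrightarrow> x < z0 \<Longrightarrow> x < f x"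
  proof (rule ccontr)
    fix x assume x: "v \<le> x" "x < z0" "\<not> x < f x"
    have c: "continuous_on {v..x} (\<lambda>t. f t - t)"
      using csf[of v x] vC x z0 ve by (intro continuous_on_diff continuous_on_id) auto
    obtain t where t: "v \<le> t" "t \<le> x" "f t - t = 0"
      using ivt2[OF c, of 0] x v(2) ve by force
    then have "(f ^^ 2) t = t" using g2 by simp
    then have "z0 \<le> t" using z0min t x z0 by simp
    then show False using t x by simp
  qed
  have ggt: "\<And>x. v \<le> x \<Longrightarrow> x < z0 \<Longrightarrow> (f ^^ 2) x < x"
  proof (rule ccontr)
    fix x assume x: "v \<le> x" "x < z0" "\<not> (f ^^ 2) x < x"
    have c: "continuous_on {v..x} (\<lambda>t. (f ^^ 2) t - t)"
      using cs[of v x 2] vC x z0 ve by (intro continuous_on_diff continuous_on_id) auto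
    obtain t where t: "v \<le> t" "t \<le> x" "(f ^^ 2) t - t = 0"
      using ivt2[OF c, of 0] x gv mPv by force
    then have "z0 \<le> t" using z0min t x z0 by simp
    then show False using t x by simp
  qed
  have fz0: "z0 \<le> f z0"
  proof (rule ccontr)
    assume x: "\<not> z0 \<le> f z0"
    have c: "continuous_on {v..z0} (\<lambda>t. f t - t)"
      using csf[of v z0] vC z0 ve by (intro continuous_on_diff continuous_on_id) auto
    obtain t where t: "v \<le> t" "t \<le> z0" "f t - t = 0"
      using ivt2[OF c, of 0] x v(2) ve vz0 by force
    then have "(f ^^ 2) t = t" using g2 by simp
    then have "z0 \<le> t" using z0min t z0 by simp
    then have "t = z0" using t by simp
    then show False using t x by simp
  qed
  have Dne: "\<exists>x. mP \<le> x \<and> x \<le> v \<and> (f ^^ 2) x = z0"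
  proof (rule ccontr)
    assume H: "\<not> ?thesis"
    have gl: "\<And>x. mP \<le> x \<Longrightarrow> x \<le> v \<Longrightarrow> (f ^^ 2) x < z0"
    proof (rule ccontr)
      fix x assume x: "mP \<le> x" "x \<le> v" "\<not> (f ^^ 2) x < z0"
      obtain t where t: "x \<le> t" "t \<le> v" "(f ^^ 2) t = z0"
        using ivt2[OF cs[of x v 2], of z0] x gv mPv vz0 aC vC by force
      then show False using H x by auto
    qed
    have it: "\<And>j. (f ^^ (2*j)) mP \<in> P \<and> (f ^^ (2*j)) mP < z0"
    proof -
      fix j show "(f ^^ (2*j)) mP \<in> P \<and> (f ^^ (2*j)) mP < z0"
      proof (induction j)
        case 0 then show ?case using mP mPv vz0 by simp
      next
        case (Suc j)
        define w where "w = (f ^^ (2*j)) mP"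
        have w: "w \<in> P" "w < z0" using Suc w_def by auto
        have eq: "(f ^^ (2*Suc j)) mP = (f ^^ 2) w"
          using fp_add[of 2 "2*j" f mP] w_def by simp
        have "(f ^^ 2) w < z0"
        proof (cases "w \<le> v")
          case True then show ?thesis using gl mP(2)[OF w(1)] by simp
        next
          case False then show ?thesis using ggt[of w] w by simp
        qed
        then show ?case using eq gPP[OF w(1)] by simp
      qed
    qed
    obtain r where r: "m - 1 = 2*r" using m by (metis odd_two_times_div_two_nat)
    have "e < z0" using it[of r] e' r by simp
    then show False using z0e by simp
  qed
  then obtain x1 where x1: "mP \<le> x1" "x1 \<le> v" "(f ^^ 2) x1 = z0" by blast
  have dP: "d \<in> {x \<in> {mP..v}. (f ^^ 2) x = z0} \<and> (\<forall>y\<in>{x \<in> {mP..v}. (f ^^ 2) x = z0}. y \<le> d)"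
    unfolding d_def mP_def[symmetric] by (rule lev_sup[OF cs x1]) (use aC vC in auto)
  have d: "mP \<le> d" "d \<le> v" "(f ^^ 2) d = z0" using dP by auto
  have dmax: "\<And>x. mP \<le> x \<Longrightarrow> x \<le> v \<Longrightarrow> (f ^^ 2) x = z0 \<Longrightarrow> x \<le> d" using dP by auto
  have z0P: "z0 \<notin> P" using gP z0(3) by auto
  have mPd: "mP < d"
  proof -
    have "d \<noteq> mP" using gPP[OF mP(1)] z0P d(3) by auto
    then show ?thesis using d by simp
  qed
  have dv: "d < v"
  proof -
    have "d \<noteq> v" using gv d(3) mPv vz0 by auto
    then show ?thesis using d by simp
  qed
  have gdv: "\<And>x. d < x \<Longrightarrow> x \<le> v \<Longrightarrow> (f ^^ 2) x < z0"
  proof (rule ccontr)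
    fix x assume x: "d < x" "x \<le> v" "\<not> (f ^^ 2) x < z0"
    obtain t where t: "x \<le> t" "t \<le> v" "(f ^^ 2) t = z0"
      using ivt2[OF cs[of x v 2], of z0] x gv mPv vz0 aC vC mPd by force
    then have "t \<le> d" using dmax x mPd by simp
    then show False using t x by simp
  qed
  have fd: "z0 \<le> f d"
  proof (rule ccontr)
    assume x: "\<not> z0 \<le> f d"
    obtain t where t: "d \<le> t" "t \<le> v" "f t = z0"
      using ivt2[OF csf[of d v], of z0] x v(2) z0e dv aC vC mPd by force
    have "t \<noteq> d" using t x by auto
    then have "(f ^^ 2) t < z0" using gdv t by simp
    then show False using t g2 fz0 by simp
  qed
  obtain x2 where x2: "v \<le> x2" "x2 \<le> z0" "(f ^^ 2) x2 = d"
    using ivt2[OF cs[of v z0 2], of d] gv mPd z0 vz0 vC dv by force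
  have uP: "u0 \<in> {x \<in> {v..z0}. (f ^^ 2) x = d} \<and> (\<forall>y\<in>{x \<in> {v..z0}. (f ^^ 2) x = d}. u0 \<le> y)"
    unfolding u0_def by (rule lev_inf[OF cs x2]) (use vC z0 in auto)
  have u0: "v \<le> u0" "u0 \<le> z0" "(f ^^ 2) u0 = d" using uP by auto
  have u0min: "\<And>x. v \<le> x \<Longrightarrow> x \<le> z0 \<Longrightarrow> (f ^^ 2) x = d \<Longrightarrow> u0 \<le> x" using uP by auto
  have uz0: "u0 < z0"
  proof -
    have "u0 \<noteq> z0" using u0 z0 dv vz0 by auto
    then show ?thesis using u0 by simp
  qed
  have gu: "\<And>x. v \<le> x \<Longrightarrow> x < u0 \<Longrightarrow> (f ^^ 2) x < d"
  proof (rule ccontr)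
    fix x assume x: "v \<le> x" "x < u0" "\<not> (f ^^ 2) x < d"
    obtain t where t: "v \<le> t" "t \<le> x" "(f ^^ 2) t = d"
      using ivt2[OF cs[of v x 2], of d] x gv mPd vC uz0 z0 ve by force
    then have "u0 \<le> t" using u0min x uz0 by simp
    then show False using t x by simp
  qed
  have fu0: "z0 \<le> f u0"
  proof (rule ccontr)
    assume x: "\<not> z0 \<le> f u0"
    obtain t where t: "v \<le> t" "t \<le> u0" "f t = z0"
      using ivt2[OF csf[of v u0], of z0] x v(2) z0e u0 vC uz0 z0 ve by force
    have "(f ^^ 2) t < t" using ggt t uz0 by simp
    then show False using t g2 fz0 uz0 by simp
  qed
  have uC: "a \<le> u0" "u0 \<le> b" "a \<le> z0" "z0 \<le> b" "a \<le> d" using u0 vC uz0 z0 ve aC mPd by auto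
  have oddu0: "\<And>q. odd q \<Longrightarrow> z0 \<le> (f ^^ q) u0"
  proof -
    fix q :: nat assume q: "odd q"
    have "q = 1 \<or> q = 3 \<or> q \<ge> 5" using q by presburger
    then consider "q = 1" | "q = 3" | "q \<ge> 5" by blast
    then show "z0 \<le> (f ^^ q) u0"
    proof cases
      case 1 then show ?thesis using fu0 by simp
    next
      case 2
      have "(f ^^ q) u0 = f ((f ^^ 2) u0)" using 2 by (simp add: numeral_3_eq_3 numeral_2_eq_2)
      then show ?thesis using fd u0 by simp
    next
      case 3
      have "\<exists>r. q = 4 + (2*r+1)" using 3 q by presburger
      then obtain r where r: "q = 4 + (2*r+1)" by blast
      have "(f ^^ 4) u0 = (f ^^ 2) ((f ^^ 2) u0)" using fp_add[of 2 2 f u0] by simp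
      then have f4: "(f ^^ 4) u0 = z0" using u0 d by simp
      have "(f ^^ q) u0 = (f ^^ (2*r+1)) ((f ^^ 4) u0)" using r fp_add[of "2*r+1" 4 f u0] by (simp add: add.commute)
      then show ?thesis using f4 per2[OF z0(3), of r] fz0 by simp
    qed
  qed
  have cov: "\<And>r c. d \<le> c \<Longrightarrow> c \<le> z0 \<Longrightarrow> \<exists>s. d \<le> s \<and> s \<le> z0 \<and> (f ^^ (2*r)) s = c"
  proof -
    fix r show "\<And>c. d \<le> c \<Longrightarrow> c \<le> z0 \<Longrightarrow> \<exists>s. d \<le> s \<and> s \<le> z0 \<and> (f ^^ (2*r)) s = c"
    proof (induction r)
      case 0 then show ?case by auto
    next
      case (Suc r)
      obtain s' where s': "d \<le> s'" "s' \<le> z0" "(f ^^ (2*r)) s' = c" using Suc by blast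
      obtain s where s: "u0 \<le> s" "s \<le> z0" "(f ^^ 2) s = s'"
        using ivt2[OF cs[of u0 z0 2], of s'] s' u0 z0 uz0 uC by force
      have "(f ^^ (2*Suc r)) s = (f ^^ (2*r)) ((f ^^ 2) s)" using fp_add[of "2*r" 2 f s] by simp
      then show ?case using s s' dv u0 by (intro exI[of _ s]) auto
    qed
  qed
  have hit: "\<And>t1 t2 q r. a \<le> t1 \<Longrightarrow> t1 \<le> t2 \<Longrightarrow> t2 \<le> b \<Longrightarrow>
     ((f ^^ q) t1 \<le> d \<and> z0 \<le> (f ^^ q) t2) \<or> ((f ^^ q) t2 \<le> d \<and> z0 \<le> (f ^^ q) t1) \<Longrightarrow>
     \<exists>t. t1 \<le> t \<and> t \<le> t2 \<and> (f ^^ (q + 2*r)) t = d"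
  proof -
    fix t1 t2 q r assume h: "a \<le> t1" "t1 \<le> t2" "t2 \<le> b"
      "((f ^^ q) t1 \<le> d \<and> z0 \<le> (f ^^ q) t2) \<or> ((f ^^ q) t2 \<le> d \<and> z0 \<le> (f ^^ q) t1)"
    obtain s where s: "d \<le> s" "s \<le> z0" "(f ^^ (2*r)) s = d" using cov[of d r] dv vz0 by auto
    obtain t where t: "t1 \<le> t" "t \<le> t2" "(f ^^ q) t = s"
      using ivt2[OF cs[OF h(1) h(3), of q] h(2), where c = s] h(4) s by force
    have "(f ^^ (q + 2*r)) t = (f ^^ (2*r)) ((f ^^ q) t)" using fp_add[of "2*r" q f t] by (simp add: add.commute)
    then show "\<exists>t. t1 \<le> t \<and> t \<le> t2 \<and> (f ^^ (q + 2*r)) t = d" using t s by auto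
  qed
  have mvP: "\<And>n. n \<ge> 1 \<Longrightarrow> mu' n \<in> {x \<in> {v..u0}. (f ^^ (m + 2*n)) x = d} \<and>
      (\<forall>y\<in>{x \<in> {v..u0}. (f ^^ (m + 2*n)) x = d}. y \<le> mu' n)"
  proof -
    fix n :: nat assume n: "n \<ge> 1"
    have a1: "(f ^^ (m + 2)) v = mP" using fp_add[of m 2 f v] gv mPm by simp
    have a2: "z0 \<le> (f ^^ (m + 2)) u0" by (rule oddu0) (use m in simp)
    obtain x3 where x3: "v \<le> x3" "x3 \<le> u0" "(f ^^ (m + 2 + 2*(n-1))) x3 = d"
      using hit[of v u0 "m+2" "n-1"] vC u0 uC a1 a2 mPd by auto
    have eq: "m + 2 + 2*(n-1) = m + 2*n" using n by simp
    have x3': "(f ^^ (m + 2*n)) x3 = d" using x3(3) eq by metis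
    show "mu' n \<in> {x \<in> {v..u0}. (f ^^ (m + 2*n)) x = d} \<and>
      (\<forall>y\<in>{x \<in> {v..u0}. (f ^^ (m + 2*n)) x = d}. y \<le> mu' n)"
      unfolding mu'_def by (rule lev_sup[OF cs x3(1) x3(2) x3']) (use vC uC in auto)
  qed
  show ?thesis
  proof (intro allI impI)
    fix n k y p assume H: "n \<ge> 1 \<and> k \<ge> 1 \<and> y \<in> {mu' n..mu n k} \<and> least_period_point f p y \<and> odd p"
    then have n: "n \<ge> 1" and k: "k \<ge> 1" and y: "mu' n \<le> y" "y \<le> mu n k" and p: "odd p" "0 < p" "(f ^^ p) y = y"
      unfolding least_period_point_def by auto
    define N where "N = m + 2*n"
    define M where "M = m + 2*n + 2*k"
    have mn: "v \<le> mu' n" "mu' n \<le> u0" "(f ^^ N) (mu' n) = d"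
      and mnmax: "\<And>x. v \<le> x \<Longrightarrow> x \<le> u0 \<Longrightarrow> (f ^^ N) x = d \<Longrightarrow> x \<le> mu' n"
      using mvP[OF n] unfolding N_def by auto
    have n1: "Suc n \<ge> 1" by simp
    have mn1: "v \<le> mu' (n+1)" "mu' (n+1) \<le> u0" "(f ^^ (N+2)) (mu' (n+1)) = d"
      and mn1max: "\<And>x. v \<le> x \<Longrightarrow> x \<le> u0 \<Longrightarrow> (f ^^ (N+2)) x = d \<Longrightarrow> x \<le> mu' (n+1)"
      using mvP[OF n1] unfolding N_def by auto
    have mono: "mu' n \<le> mu' (n+1)"
    proof -
      have "z0 \<le> (f ^^ N) u0" unfolding N_def by (rule oddu0) (use m in simp)
      then obtain t where t: "mu' n \<le> t" "t \<le> u0" "(f ^^ (N + 2*1)) t = d"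
        using hit[of "mu' n" u0 N 1] mn vC uC by auto
      then have "t \<le> mu' (n+1)" using mn1max mn by simp
      then show ?thesis using t by simp
    qed
    have fN2: "\<And>x. (f ^^ (N + 2)) x = (f ^^ 2) ((f ^^ N) x)" using fp_add[of 2 N f] by (simp add: add.commute)
    have z0at: "(f ^^ (N+2)) (mu' n) = z0" using fN2[of "mu' n"] mn(3) d(3) g2 by simp
    obtain x4 where x4: "mu' n \<le> x4" "x4 \<le> mu' (n+1)" "(f ^^ (N + 2 + 2*(k-1))) x4 = d"
      using hit[of "mu' n" "mu' (n+1)" "N+2" "k-1"] mono mn mn1 vC uC z0at by auto
    have eq: "N + 2 + 2*(k-1) = M" using k unfolding N_def M_def by simp
    have x4': "(f ^^ M) x4 = d" using x4(3) eq by metis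
    have muP: "mu n k \<in> {x \<in> {mu' n..mu' (n+1)}. (f ^^ M) x = d} \<and>
      (\<forall>y\<in>{x \<in> {mu' n..mu' (n+1)}. (f ^^ M) x = d}. mu n k \<le> y)"
      unfolding mu_def M_def by (rule lev_inf[OF cs x4(1) x4(2) x4'[unfolded M_def]]) (use mn mn1 vC uC in auto)
    have mu: "mu' n \<le> mu n k" "mu n k \<le> mu' (n+1)" "(f ^^ M) (mu n k) = d" using muP by auto
    have mumin: "\<And>x. mu' n \<le> x \<Longrightarrow> x \<le> mu' (n+1) \<Longrightarrow> (f ^^ M) x = d \<Longrightarrow> mu n k \<le> x" using muP by auto
    have yb: "v \<le> y" "y \<le> u0" "y < z0" using y mu mn mn1 uz0 by auto
    show "p \<ge> M"
    proof (rule ccontr)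
      assume pM: "\<not> p \<ge> M"
      show False
      proof (cases "y = mu' n \<or> y = mu n k")
        case True
        then obtain Q where Q: "(f ^^ Q) y = d" using mn mu by blast
        have fQ2: "(f ^^ (Q+2)) y = z0" using fp_add[of 2 Q f y] Q d by (simp add: add.commute)
        have "(f ^^ p) ((f ^^ (Q+2)) y) = (f ^^ (Q+2)) ((f ^^ p) y)" by (rule fp_comm)
        then have pz: "(f ^^ p) z0 = z0" using fQ2 p by simp
        obtain r where r: "p = 2*r+1" using p(1) oddE by blast
        have fz: "f z0 = z0" using per2[OF z0(3), of r] pz r by simp
        have e1: "(f ^^ (p*(Q+2))) y = y" by (rule perj[OF p(3)])
        have hq: "Q+2 \<le> p*(Q+2)" using p(2) by (cases p) auto
        have e2: "(p*(Q+2) - (Q+2)) + (Q+2) = p*(Q+2)" using hq by simp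
        have e3: "(f ^^ ((p*(Q+2) - (Q+2)) + (Q+2))) y = (f ^^ (p*(Q+2) - (Q+2))) ((f ^^ (Q+2)) y)"
          by (rule fp_add)
        have "(f ^^ (p*(Q+2) - (Q+2))) ((f ^^ (Q+2)) y) = y" using e3 e1 unfolding e2 by simp
        then have "y = z0" using fQ2 fixj[of f z0] fz by simp
        then show False using yb by simp
      next
        case False
        then have yi: "mu' n < y" "y < mu n k" using y by auto
        define q where "q = p + 2"
        have qo: "odd q" using p q_def by simp
        have qy: "(f ^^ q) y = (f ^^ 2) y" using fp_add[of 2 p f y] p q_def by (simp add: add.commute)
        have gy: "(f ^^ 2) y < d" using gu yb yi mu mn1 by simp
        have No: "odd N" using m unfolding N_def by simp
        have Mo: "odd M" using m unfolding M_def by simp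
        have qM: "q \<le> M" using pM p Mo q_def by presburger
        show False
        proof (cases "q \<le> N")
          case True
          have "\<exists>r. N = q + 2*r" using True qo No by presburger
          then obtain r where r: "N = q + 2*r" by blast
          obtain t where t: "y \<le> t" "t \<le> u0" "(f ^^ (q + 2*r)) t = d"
            using hit[of y u0 q r] yb vC uC qy gy oddu0[OF qo] by auto
          then have "t \<le> mu' n" using mnmax yb r by simp
          then show False using t yi by simp
        next
          case False
          have "\<exists>i. q = N + 2*i \<and> i \<ge> 1" using False qo No by presburger
          then obtain i where i: "q = N + 2*i" "i \<ge> 1" by blast
          have "(f ^^ q) (mu' n) = (f ^^ (2*i)) ((f ^^ N) (mu' n))" using i fp_add[of "2*i" N f] by (simp add: add.commute)
          moreover obtain i' where i': "i = Suc i'" using i by (cases i) auto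
          moreover have "(f ^^ (2*Suc i')) d = z0" using fp_add[of "2*i'" 2 f d] d per2[OF z0(3), of i'] by simp
          ultimately have zq: "(f ^^ q) (mu' n) = z0" using mn by simp
          obtain t where t: "mu' n \<le> t" "t \<le> y" "(f ^^ (q + 2*(k-i))) t = d"
            using hit[of "mu' n" y q "k-i"] yb yi mn vC uC qy gy zq by auto
          have "q + 2*(k-i) = M" using i qM unfolding N_def M_def by simp
          then have "mu n k \<le> t" using mumin t yi mu by simp
          then show False using t yi by simp
        qed
      qed
    qed
  qed
qed


end
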